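(* Let $\alpha>1$ and $D,R_{tot},L_0>0$. Let $(k_{nf}^0,k_{pf}^0)$ and $(k_{nf}^1,k_{pf}^1)$ be two pairs of positive parameters, and suppose a function $R\in C^2([-L_0,L_0])$ that is positive on $(-L_0,L_0)$ and not constant solves $$-D R''(x)=-k_{nf}R(x)+k_{pf}R(x)^{\alpha}\Big(1-\frac{1}{R_{tot}}\int_{-L_0}^{L_0}R(s)\,ds\Big),\qquad R(\pm L_0)=0,$$ both for $(k_{nf},k_{pf})=(k_{nf}^0,k_{pf}^0)$ and for $(k_{nf},k_{pf})=(k_{nf}^1,k_{pf}^1)$, with $\int_{-L_0}^{L_0}R<R_{tot}$. Then $k_{nf}^0=k_{nf}^1$ and $k_{pf}^0=k_{pf}^1$.
   Context: All constants are fixed and positive, with $\alpha>1$. *)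

theory Defs
  imports "HOL-Analysis.Analysis"
begin

definition C2_on :: "real \<Rightarrow> real \<Rightarrow> (real \<Rightarrow> real) \<Rightarrow> bool" where
  "C2_on a b R \<longleftrightarrow> (\<exists>R1 R2.
      (\<forall>x\<in>{a..b}. (R has_real_derivative R1 x) (at x within {a..b})) \<and>
      (\<forall>x\<in>{a..b}. (R1 has_real_derivative R2 x) (at x within {a..b})) \<and>
      continuous_on {a..b} R2)"

definition solves_bvp ::
  "real \<Rightarrow> real \<Rightarrow> real \<Rightarrow> real \<Rightarrow> real \<Rightarrow> real \<Rightarrow> (real \<Rightarrow> real) \<Rightarrow> bool" where
  "solves_bvp \<alpha> D Rtot L0 knf kpf R \<longleftrightarrow> (\<exists>R1 R2.
      (\<forall>x\<in>{-L0..L0}. (R has_real_derivative R1 x) (at x within {-L0..L0})) \<and>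
      (\<forall>x\<in>{-L0..L0}. (R1 has_real_derivative R2 x) (at x within {-L0..L0})) \<and>
      (\<forall>x\<in>{-L0..L0}. - D * R2 x =
          - knf * R x + kpf * (R x powr \<alpha>) * (1 - integral {-L0..L0} R / Rtot)) \<and>
      R (-L0) = 0 \<and> R L0 = 0)"

end

theory Submission
  imports Defs
begin

theorem mainTheorem6:
  fixes \<alpha> D Rtot L0 knf0 kpf0 knf1 kpf1 :: real and R :: "real \<Rightarrow> real"
  assumes "\<alpha> > 1" and "D > 0" and "Rtot > 0" and "L0 > 0"
    and "knf0 > 0" and "kpf0 > 0" and "knf1 > 0" and "kpf1 > 0"
    and "C2_on (-L0) L0 R"
    and "\<forall>x\<in>{-L0<..<L0}. R x > 0"
    and "\<exists>x\<in>{-L0..L0}. \<exists>y\<in>{-L0..L0}. R x \<noteq> R y"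
    and "solves_bvp \<alpha> D Rtot L0 knf0 kpf0 R"
    and "solves_bvp \<alpha> D Rtot L0 knf1 kpf1 R"
    and "integral {-L0..L0} R < Rtot"
  shows "knf0 = knf1 \<and> kpf0 = kpf1"
proof -
  define c where "c = 1 - integral {-L0..L0} R / Rtot"
  have cpos: "c > 0" using assms(3,14) by (simp add: c_def field_simps)
  obtain A1 A2 where A1: "\<forall>x\<in>{-L0..L0}. (R has_real_derivative A1 x) (at x within {-L0..L0})"
    and A2: "\<forall>x\<in>{-L0..L0}. (A1 has_real_derivative A2 x) (at x within {-L0..L0})"
    and Ae: "\<forall>x\<in>{-L0..L0}. - D * A2 x = - knf0 * R x + kpf0 * (R x powr \<alpha>) * c"
    and Rb: "R (-L0) = 0" "R L0 = 0"
    using assms(12) unfolding solves_bvp_def c_def by blast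
  obtain B1 B2 where B1: "\<forall>x\<in>{-L0..L0}. (R has_real_derivative B1 x) (at x within {-L0..L0})"
    and B2: "\<forall>x\<in>{-L0..L0}. (B1 has_real_derivative B2 x) (at x within {-L0..L0})"
    and Be: "\<forall>x\<in>{-L0..L0}. - D * B2 x = - knf1 * R x + kpf1 * (R x powr \<alpha>) * c"
    using assms(13) unfolding solves_bvp_def c_def by blast
  have int: "interior {-L0..L0} = {-L0<..<L0}" by simp
  have atx: "x \<in> {-L0<..<L0} \<Longrightarrow> at x within {-L0..L0} = at x" for x
    by (rule at_within_interior) (simp add: int)
  have e1: "A1 x = B1 x" if "x \<in> {-L0<..<L0}" for x
    using A1 B1 that atx[OF that] by (metis DERIV_unique greaterThanLessThan_subseteq_atLeastAtMost_iff order_refl subsetD)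
  have e2: "A2 x = B2 x" if x: "x \<in> {-L0<..<L0}" for x
  proof -
    have xx: "x \<in> {-L0..L0}" using x by auto
    have "(A1 has_real_derivative A2 x) (at x)" using A2 xx atx[OF x] by metis
    hence "(B1 has_real_derivative A2 x) (at x)"
      by (rule has_field_derivative_transform_within_open[where S="{-L0<..<L0}"]) (use x e1 in auto)
    moreover have "(B1 has_real_derivative B2 x) (at x)" using B2 xx atx[OF x] by metis
    ultimately show ?thesis by (rule DERIV_unique)
  qed
  have key: "(knf1 - knf0) * R x = (kpf1 - kpf0) * c * R x powr \<alpha>" if x: "x \<in> {-L0<..<L0}" for x
  proof -
    have xx: "x \<in> {-L0..L0}" using x by auto
    have "- knf0 * R x + kpf0 * (R x powr \<alpha>) * c = - knf1 * R x + kpf1 * (R x powr \<alpha>) * c"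
      using Ae Be xx e2[OF x] by metis
    thus ?thesis by (simp add: algebra_simps)
  qed
  have key2: "(knf1 - knf0) = (kpf1 - kpf0) * c * R x powr (\<alpha> - 1)" if x: "x \<in> {-L0<..<L0}" for x
  proof -
    have p: "R x > 0" using assms(10) x by auto
    have "R x powr \<alpha> = R x powr (\<alpha> - 1) * R x" using p by (simp add: powr_diff)
    hence "(knf1 - knf0) * R x = ((kpf1 - kpf0) * c * R x powr (\<alpha> - 1)) * R x"
      using key[OF x] by (simp add: algebra_simps)
    thus ?thesis using p by simp
  qed
  have z: "(0::real) \<in> {-L0<..<L0}" using assms(4) by simp
  have R0: "R 0 > 0" using assms(10) z by auto
  have cont: "continuous_on {-L0..L0} R"
    using A1 by (metis DERIV_continuous continuous_on_eq_continuous_within)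
  have cont': "continuous_on {0..L0} R"
    by (rule continuous_on_subset[OF cont]) (use assms(4) in auto)
  obtain y where y: "0 \<le> y" "y \<le> L0" "R y = R 0 / 2"
    using IVT2'[of R L0 "R 0 / 2" 0, OF _ _ _ cont'] Rb R0 assms(4) by auto
  have yin: "y \<in> {-L0<..<L0}" using y R0 Rb assms(4) by (cases "y = 0"; cases "y = L0") auto
  have kp: "kpf0 = kpf1"
  proof (rule ccontr)
    assume ne: "kpf0 \<noteq> kpf1"
    have "(kpf1 - kpf0) * c * R y powr (\<alpha> - 1) = (kpf1 - kpf0) * c * R 0 powr (\<alpha> - 1)"
      using key2[OF yin] key2[OF z] by metis
    hence "R y powr (\<alpha> - 1) = R 0 powr (\<alpha> - 1)" using ne cpos by simp
    moreover have "R y powr (\<alpha> - 1) < R 0 powr (\<alpha> - 1)"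
      using y(3) R0 assms(1) by (intro powr_less_mono2) auto
    ultimately show False by simp
  qed
  have "knf0 = knf1" using key2[OF z] kp by simp
  with kp show ?thesis by simp
qed

end
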